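(* Let $\Gamma,\Delta$ be finite multisets of formulas and $\Sigma$ a finite multiset of outmost-boxed formulas. For every propositional variable $p$ and every agent symbol $a$ there exists a formula $A$ such that: (i) $\mathsf{V}(A)\subseteq\mathsf{V}(\Sigma\cup\Gamma\cup\Delta)\setminus\{p\}$ and $\mathsf{Agt}(A)\subseteq\mathsf{Agt}(\Sigma\cup\Gamma\cup\Delta)\setminus\{a\}$; (ii) $\mathsf{G}(\mathbf{KT}^+_D)\vdash\Sigma\mid\Gamma,A\Rightarrow\Delta$; (iii) for all finite multisets $\Pi,\Lambda$ of formulas and every finite multiset $\Theta$ of outmost-boxed formulas with $p\notin\mathsf{V}(\Pi\cup\Lambda\cup\Theta)$ and $a\notin\mathsf{Agt}(\Pi\cup\Lambda\cup\Theta)$: if $\mathsf{G}(\mathbf{KT}^+_D)\vdash\Theta,\Sigma\mid\Pi,\Gamma\Rightarrow\Delta,\Lambda$, then $\mathsf{G}(\mathbf{KT}^+_D)\vdash\emptyset\mid\Theta,\Pi\Rightarrow A,\Lambda$.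
   Context: Language: fix a finite nonempty set $\mathsf{Agt}$ of agent symbols and a countable set $\mathsf{Prop}$ of propositional variables; $\mathsf{Grp}$ is the set of nonempty subsets of $\mathsf{Agt}$. Formulas: $\alpha::=p\mid\bot\mid\alpha\wedge\alpha\mid\alpha\vee\alpha\mid\alpha\rightarrow\alpha\mid\neg\alpha\mid D_G\alpha$ with $p\in\mathsf{Prop}$, $G\in\mathsf{Grp}$. $\mathsf{V}(\cdot)$ is the set of propositional variables occurring, $\mathsf{Agt}(\cdot)$ the set of agent symbols occurring (the union of all $G$ with $D_G$ occurring); for multisets these are unions. An outmost-boxed formula is one of the form $D_G\gamma$. Calculus $\mathsf{G}(\mathbf{KT}^+_D)$: a T-sequent $\Sigma\mid\Gamma\Rightarrow\Delta$ consists of finite multisets $\Gamma,\Delta$ of formulas and a finite multiset $\Sigma$ of outmost-boxed formulas; $\vdash S$ means $S$ is the root of a finite tree built from initial sequents by the rules. Initial sequents: $\Sigma\mid\Gamma,p\Rightarrow p,\Delta$ ($p\in\mathsf{Prop}$) and $\Sigma\mid\bot,\Gamma\Rightarrow\Delta$. Propositional rules (with $\Sigma$ unchanged): $(R\wedge)$ from $\Sigma\mid\Gamma\Rightarrow\Delta,\alpha_1$ and $\Sigma\mid\Gamma\Rightarrow\Delta,\alpha_2$ infer $\Sigma\mid\Gamma\Rightarrow\Delta,\alpha_1\wedge\alpha_2$; $(L\wedge)$ from $\Sigma\mid\alpha_1,\alpha_2,\Gamma\Rightarrow\Delta$ infer $\Sigma\mid\alpha_1\wedge\alpha_2,\Gamma\Rightarrow\Delta$;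 $(R\vee)$ from $\Sigma\mid\Gamma\Rightarrow\Delta,\alpha_1,\alpha_2$ infer $\Sigma\mid\Gamma\Rightarrow\Delta,\alpha_1\vee\alpha_2$; $(L\vee)$ from $\Sigma\mid\alpha_1,\Gamma\Rightarrow\Delta$ and $\Sigma\mid\alpha_2,\Gamma\Rightarrow\Delta$ infer $\Sigma\mid\alpha_1\vee\alpha_2,\Gamma\Rightarrow\Delta$; $(R\rightarrow)$ from $\Sigma\mid\alpha_1,\Gamma\Rightarrow\Delta,\alpha_2$ infer $\Sigma\mid\Gamma\Rightarrow\Delta,\alpha_1\rightarrow\alpha_2$; $(L\rightarrow)$ from $\Sigma\mid\Gamma\Rightarrow\Delta,\alpha_1$ and $\Sigma\mid\alpha_2,\Gamma\Rightarrow\Delta$ infer $\Sigma\mid\alpha_1\rightarrow\alpha_2,\Gamma\Rightarrow\Delta$; $(R\neg)$ from $\Sigma\mid\alpha,\Gamma\Rightarrow\Delta$ infer $\Sigma\mid\Gamma\Rightarrow\Delta,\neg\alpha$; $(L\neg)$ from $\Sigma\mid\Gamma\Rightarrow\Delta,\alpha$ infer $\Sigma\mid\neg\alpha,\Gamma\Rightarrow\Delta$. Modal rules: $(D_K^+)$: from $\emptyset\mid\alpha_1,\dots,\alpha_n\Rightarrow\beta$ ($n\ge0$) infer $\Sigma,D_{G_1}\alpha_1,\dots,D_{G_n}\alpha_n\mid\Pi\Rightarrow D_G\beta,\Omega$, provided $G_i\subseteq G$ for all $i$, $\Sigma$ consists only of formulas $D_H\gamma$ with $H\not\subseteq G$,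 $\Pi$ consists only of propositional variables and $\bot$, and $\Omega$ only of propositional variables, $\bot$ and outmost-boxed formulas; $(D_T^+)$: from $D_G\alpha,\Sigma\mid\Gamma,\alpha\Rightarrow\Delta$ infer $\Sigma\mid\Gamma,D_G\alpha\Rightarrow\Delta$. *)

theory Defs
  imports Main "HOL-Library.Multiset"
begin

datatype 'a fm =
    Var nat
  | Bot
  | And "'a fm" "'a fm"
  | Or "'a fm" "'a fm"
  | Imp "'a fm" "'a fm"
  | Neg "'a fm"
  | D "'a set" "'a fm"

fun wf :: "'a fm \<Rightarrow> bool" where
  "wf (Var p) = True"
| "wf Bot = True"
| "wf (And x y) = (wf x \<and> wf y)"
| "wf (Or x y) = (wf x \<and> wf y)"
| "wf (Imp x y) = (wf x \<and> wf y)"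
| "wf (Neg x) = wf x"
| "wf (D G x) = (G \<noteq> {} \<and> wf x)"

fun vars :: "'a fm \<Rightarrow> nat set" where
  "vars (Var p) = {p}"
| "vars Bot = {}"
| "vars (And x y) = vars x \<union> vars y"
| "vars (Or x y) = vars x \<union> vars y"
| "vars (Imp x y) = vars x \<union> vars y"
| "vars (Neg x) = vars x"
| "vars (D G x) = vars x"

fun agts :: "'a fm \<Rightarrow> 'a set" where
  "agts (Var p) = {}"
| "agts Bot = {}"
| "agts (And x y) = agts x \<union> agts y"
| "agts (Or x y) = agts x \<union> agts y"
| "agts (Imp x y) = agts x \<union> agts y"
| "agts (Neg x) = agts x"
| "agts (D G x) = G \<union> agts x"

definition vars_ms :: "'a fm multiset \<Rightarrow> nat set" where
  "vars_ms M = (\<Union>x\<in>set_mset M. vars x)"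

definition agts_ms :: "'a fm multiset \<Rightarrow> 'a set" where
  "agts_ms M = (\<Union>x\<in>set_mset M. agts x)"

definition wf_ms :: "'a fm multiset \<Rightarrow> bool" where
  "wf_ms M = (\<forall>x\<in>#M. wf x)"

fun boxed :: "'a fm \<Rightarrow> bool" where
  "boxed (D G x) = True"
| "boxed _ = False"

definition boxed_ms :: "'a fm multiset \<Rightarrow> bool" where
  "boxed_ms M = (\<forall>x\<in>#M. boxed x)"

fun atom_or_bot :: "'a fm \<Rightarrow> bool" where
  "atom_or_bot (Var p) = True"
| "atom_or_bot Bot = True"
| "atom_or_bot _ = False"

text \<open>Derivability in G(KT+_D): deriv S G Dl means  S | G \<Rightarrow> Dl.
The boxed-ness of the Sigma component (T-sequent condition) is imposed at the
leaves; all rules preserve it.\<close>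
inductive deriv :: "'a fm multiset \<Rightarrow> 'a fm multiset \<Rightarrow> 'a fm multiset \<Rightarrow> bool" where
  Ax: "boxed_ms S \<Longrightarrow> deriv S (add_mset (Var p) G) (add_mset (Var p) Dl)"
| BotL: "boxed_ms S \<Longrightarrow> deriv S (add_mset Bot G) Dl"
| AndR: "deriv S G (add_mset a1 Dl) \<Longrightarrow> deriv S G (add_mset a2 Dl)
         \<Longrightarrow> deriv S G (add_mset (And a1 a2) Dl)"
| AndL: "deriv S (add_mset a1 (add_mset a2 G)) Dl \<Longrightarrow> deriv S (add_mset (And a1 a2) G) Dl"
| OrR: "deriv S G (add_mset a1 (add_mset a2 Dl)) \<Longrightarrow> deriv S G (add_mset (Or a1 a2) Dl)"
| OrL: "deriv S (add_mset a1 G) Dl \<Longrightarrow> deriv S (add_mset a2 G) Dl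
         \<Longrightarrow> deriv S (add_mset (Or a1 a2) G) Dl"
| ImpR: "deriv S (add_mset a1 G) (add_mset a2 Dl) \<Longrightarrow> deriv S G (add_mset (Imp a1 a2) Dl)"
| ImpL: "deriv S G (add_mset a1 Dl) \<Longrightarrow> deriv S (add_mset a2 G) Dl
         \<Longrightarrow> deriv S (add_mset (Imp a1 a2) G) Dl"
| NegR: "deriv S (add_mset a G) Dl \<Longrightarrow> deriv S G (add_mset (Neg a) Dl)"
| NegL: "deriv S G (add_mset a Dl) \<Longrightarrow> deriv S (add_mset (Neg a) G) Dl"
| DK: "deriv {#} (mset (map snd L)) {#b#}
       \<Longrightarrow> (\<forall>(Gi, ai)\<in>set L. Gi \<subseteq> Grp)
       \<Longrightarrow> (\<forall>x\<in>#S. \<exists>H c. x = D H c \<and> \<not> H \<subseteq> Grp)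
       \<Longrightarrow> (\<forall>x\<in>#P. atom_or_bot x)
       \<Longrightarrow> (\<forall>x\<in>#Om. atom_or_bot x \<or> boxed x)
       \<Longrightarrow> deriv (S + mset (map (\<lambda>(Gi, ai). D Gi ai) L)) P (add_mset (D Grp b) Om)"
| DT: "deriv (add_mset (D Grp a) S) (add_mset a G) Dl \<Longrightarrow> deriv S (add_mset (D Grp a) G) Dl"

end

theory Submission
  imports Defs
begin

lemma deriv_boxed: "deriv S G Dl \<Longrightarrow> boxed_ms S"
  by (induction rule: deriv.induct) (auto simp: boxed_ms_def)

lemma Ax': "Var q \<in># G \<Longrightarrow> Var q \<in># Dl \<Longrightarrow> boxed_ms S \<Longrightarrow> deriv S G Dl"
  by (metis deriv.Ax insert_DiffM)
lemma BotL': "Bot \<in># G \<Longrightarrow> boxed_ms S \<Longrightarrow> deriv S G Dl"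
  by (metis deriv.BotL insert_DiffM)
lemma AndR': "And x y \<in># Dl \<Longrightarrow> deriv S G (add_mset x (Dl - {#And x y#})) \<Longrightarrow> deriv S G (add_mset y (Dl - {#And x y#})) \<Longrightarrow> deriv S G Dl"
  by (metis deriv.AndR insert_DiffM)
lemma AndL': "And x y \<in># G \<Longrightarrow> deriv S (add_mset x (add_mset y (G - {#And x y#}))) Dl \<Longrightarrow> deriv S G Dl"
  by (metis deriv.AndL insert_DiffM)
lemma OrR': "Or x y \<in># Dl \<Longrightarrow> deriv S G (add_mset x (add_mset y (Dl - {#Or x y#}))) \<Longrightarrow> deriv S G Dl"
  by (metis deriv.OrR insert_DiffM)
lemma OrL': "Or x y \<in># G \<Longrightarrow> deriv S (add_mset x (G - {#Or x y#})) Dl \<Longrightarrow> deriv S (add_mset y (G - {#Or x y#})) Dl \<Longrightarrow> deriv S G Dl"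
  by (metis deriv.OrL insert_DiffM)
lemma ImpR': "Imp x y \<in># Dl \<Longrightarrow> deriv S (add_mset x G) (add_mset y (Dl - {#Imp x y#})) \<Longrightarrow> deriv S G Dl"
  by (metis deriv.ImpR insert_DiffM)
lemma ImpL': "Imp x y \<in># G \<Longrightarrow> deriv S (G - {#Imp x y#}) (add_mset x Dl) \<Longrightarrow> deriv S (add_mset y (G - {#Imp x y#})) Dl \<Longrightarrow> deriv S G Dl"
  by (metis deriv.ImpL insert_DiffM)
lemma NegR': "Neg x \<in># Dl \<Longrightarrow> deriv S (add_mset x G) (Dl - {#Neg x#}) \<Longrightarrow> deriv S G Dl"
  by (metis deriv.NegR insert_DiffM)
lemma NegL': "Neg x \<in># G \<Longrightarrow> deriv S (G - {#Neg x#}) (add_mset x Dl) \<Longrightarrow> deriv S G Dl"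
  by (metis deriv.NegL insert_DiffM)
lemma DT': "D H x \<in># G \<Longrightarrow> deriv (add_mset (D H x) S) (add_mset x (G - {#D H x#})) Dl \<Longrightarrow> deriv S G Dl"
  by (metis deriv.DT insert_DiffM)

fun grp :: "'a fm \<Rightarrow> 'a set" where
  "grp (D G x) = G" | "grp _ = {}"
fun unbox :: "'a fm \<Rightarrow> 'a fm" where
  "unbox (D G x) = x" | "unbox x = x"

lemma boxed_eq: "boxed x \<Longrightarrow> x = D (grp x) (unbox x)"
  by (cases x) auto

definition sel :: "'a set \<Rightarrow> 'a fm multiset \<Rightarrow> 'a fm multiset" where
  "sel G S = filter_mset (\<lambda>x. grp x \<subseteq> G) S"

lemma DK': "deriv {#} (image_mset unbox (sel Grp S)) {#b#} \<Longrightarrow> boxed_ms S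
  \<Longrightarrow> (\<forall>x\<in>#P. atom_or_bot x) \<Longrightarrow> (\<forall>x\<in>#Om. atom_or_bot x \<or> boxed x)
  \<Longrightarrow> deriv S P (add_mset (D Grp b) Om)"
proof -
  assume a1: "deriv {#} (image_mset unbox (sel Grp S)) {#b#}" and bx: "boxed_ms S"
    and a3: "\<forall>x\<in>#P. atom_or_bot x" and a4: "\<forall>x\<in>#Om. atom_or_bot x \<or> boxed x"
  obtain xs where xs: "mset xs = sel Grp S" by (meson ex_mset)
  define L where "L = map (\<lambda>x. (grp x, unbox x)) xs"
  have bxs: "\<forall>x\<in>set xs. boxed x" using bx xs unfolding boxed_ms_def sel_def
    by (metis in_multiset_in_set multiset_partition union_iff)
  have e1: "map (\<lambda>(Gi, ai). D Gi ai) L = xs" unfolding L_def using bxs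
    by (induction xs) (auto elim: boxed.elims)
  have e2: "mset (map snd L) = image_mset unbox (sel Grp S)" unfolding L_def using xs
    by (metis (no_types, lifting) map_map mset_map o_def snd_conv map_eq_conv)
  have "S = filter_mset (\<lambda>x. \<not> grp x \<subseteq> Grp) S + sel Grp S" unfolding sel_def
    by (metis add.commute multiset_partition)
  moreover have "\<forall>(Gi, ai)\<in>set L. Gi \<subseteq> Grp" unfolding L_def using xs
    by (auto simp: sel_def dest!: in_multiset_in_set[THEN iffD2] ) 
  moreover have "\<forall>x\<in>#filter_mset (\<lambda>x. \<not> grp x \<subseteq> Grp) S. \<exists>H c. x = D H c \<and> \<not> H \<subseteq> Grp"
    using bx unfolding boxed_ms_def by (metis boxed_eq count_eq_zero_iff count_filter_mset)
  ultimately have "deriv (filter_mset (\<lambda>x. \<not> grp x \<subseteq> Grp) S + mset (map (\<lambda>(Gi, ai). D Gi ai) L)) P (add_mset (D Grp b) Om)"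
    using a1[folded e2] a3 a4 by (intro deriv.DK) auto
  then show ?thesis using e1 xs \<open>S = _\<close> by metis
qed


definition msz :: "'a fm multiset \<Rightarrow> nat" where
  "msz M = sum_mset (image_mset size M)"

lemma msz_add[simp]: "msz (add_mset x M) = size x + msz M" "msz (M + N) = msz M + msz N" "msz {#} = 0"
  by (auto simp: msz_def)

lemma DK_dec:
  assumes "\<forall>(Gi, ai)\<in>set L. Gi \<subseteq> Grp" "\<forall>x\<in>#S. \<exists>H c. x = D H c \<and> \<not> H \<subseteq> Grp"
  shows "sel Grp (S + mset (map (\<lambda>(Gi, ai). D Gi ai) L)) = mset (map (\<lambda>(Gi, ai). D Gi ai) L)"
    "image_mset unbox (sel Grp (S + mset (map (\<lambda>(Gi, ai). D Gi ai) L))) = mset (map snd L)"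
proof -
  have 1: "sel Grp S = {#}" using assms(2) unfolding sel_def
    apply (auto simp: filter_mset_eq_conv) by (metis grp.simps(1))
  have 2: "sel Grp (mset (map (\<lambda>(Gi, ai). D Gi ai) L)) = mset (map (\<lambda>(Gi, ai). D Gi ai) L)"
    using assms(1) unfolding sel_def by (induction L) auto
  show "sel Grp (S + mset (map (\<lambda>(Gi, ai). D Gi ai) L)) = mset (map (\<lambda>(Gi, ai). D Gi ai) L)"
    using 1 2 by (simp add: sel_def)
  moreover have "image_mset unbox (mset (map (\<lambda>(Gi, ai). D Gi ai) L)) = mset (map snd L)"
    by (induction L) auto
  ultimately show "image_mset unbox (sel Grp (S + mset (map (\<lambda>(Gi, ai). D Gi ai) L))) = mset (map snd L)"
    by simp
qed

lemma boxed_ms_simps[simp]: "boxed_ms (add_mset x M) = (boxed x \<and> boxed_ms M)" "boxed_ms (M + N) = (boxed_ms M \<and> boxed_ms N)"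
  "boxed_ms {#}"
  by (auto simp: boxed_ms_def)

lemma sat:
  assumes base: "\<And>S' G' D'. boxed_ms S' \<Longrightarrow> \<forall>x\<in>#G'. atom_or_bot x \<Longrightarrow> \<forall>x\<in>#D'. atom_or_bot x \<or> boxed x
     \<Longrightarrow> deriv (S0+S') (P0+G') (D0+D')"
  shows "boxed_ms S' \<Longrightarrow> deriv (S0+S') (P0+G') (D0+D')"
proof (induction "msz G' + msz D'" arbitrary: S' G' D' rule: less_induct)
  case less
  show ?case
  proof (cases "\<exists>x\<in>#G'. \<not> atom_or_bot x")
    case True
    then obtain x G1 where G1: "G' = add_mset x G1" "\<not> atom_or_bot x" by (metis multi_member_split)
    show ?thesis
    proof (cases x)
      case (And x1 x2)
      have "deriv (S0+S') (P0 + (add_mset x1 (add_mset x2 G1))) (D0+D')" 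
        by (rule less.hyps) (use less.prems in \<open>auto simp: G1 And\<close>)
      then show ?thesis unfolding G1 And by (simp add: deriv.AndL)
    next
      case (Or x1 x2)
      have "deriv (S0+S') (P0 + (add_mset x1 G1)) (D0+D')" 
        by (rule less.hyps) (use less.prems in \<open>auto simp: G1 Or\<close>)
      moreover have "deriv (S0+S') (P0 + (add_mset x2 G1)) (D0+D')" 
        by (rule less.hyps) (use less.prems in \<open>auto simp: G1 Or\<close>)
      ultimately show ?thesis unfolding G1 Or by (simp add: deriv.OrL)
    next
      case (Imp x1 x2)
      have "deriv (S0+S') (P0 + G1) (D0+add_mset x1 D')" 
        by (rule less.hyps) (use less.prems in \<open>auto simp: G1 Imp\<close>)
      moreover have "deriv (S0+S') (P0 + (add_mset x2 G1)) (D0+D')" 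
        by (rule less.hyps) (use less.prems in \<open>auto simp: G1 Imp\<close>)
      ultimately show ?thesis unfolding G1 Imp by (simp add: deriv.ImpL)
    next
      case (Neg x1)
      have "deriv (S0+S') (P0 + G1) (D0+add_mset x1 D')" 
        by (rule less.hyps) (use less.prems in \<open>auto simp: G1 Neg\<close>)
      then show ?thesis unfolding G1 Neg by (simp add: deriv.NegL)
    next
      case (D H c)
      have "deriv (S0+add_mset (D H c) S') (P0 + add_mset c G1) (D0+D')" 
        by (rule less.hyps) (use less.prems in \<open>auto simp: G1 D\<close>)
      then show ?thesis unfolding G1 D by (simp add: deriv.DT)
    qed (use G1 in auto)
  next
    case False
    note F1 = this
    show ?thesis
    proof (cases "\<exists>x\<in>#D'. \<not> (atom_or_bot x \<or> boxed x)")
      case True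
      then obtain x D1 where D1: "D' = add_mset x D1" "\<not> (atom_or_bot x \<or> boxed x)" by (metis multi_member_split)
      show ?thesis
      proof (cases x)
        case (And x1 x2)
        have "deriv (S0+S') (P0 + G') (D0+add_mset x1 D1)" 
          by (rule less.hyps) (use less.prems in \<open>auto simp: D1 And\<close>)
        moreover have "deriv (S0+S') (P0 + G') (D0+add_mset x2 D1)" 
          by (rule less.hyps) (use less.prems in \<open>auto simp: D1 And\<close>)
        ultimately show ?thesis unfolding D1 And by (simp add: deriv.AndR)
      next
        case (Or x1 x2)
        have "deriv (S0+S') (P0 + G') (D0+add_mset x1 (add_mset x2 D1))" 
          by (rule less.hyps) (use less.prems in \<open>auto simp: D1 Or\<close>)
        then show ?thesis unfolding D1 Or by (simp add: deriv.OrR)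
      next
        case (Imp x1 x2)
        have "deriv (S0+S') (P0 + add_mset x1 G') (D0+add_mset x2 D1)" 
          by (rule less.hyps) (use less.prems in \<open>auto simp: D1 Imp\<close>)
        then show ?thesis unfolding D1 Imp by (simp add: deriv.ImpR)
      next
        case (Neg x1)
        have "deriv (S0+S') (P0 + add_mset x1 G') (D0+D1)" 
          by (rule less.hyps) (use less.prems in \<open>auto simp: D1 Neg\<close>)
        then show ?thesis unfolding D1 Neg by (simp add: deriv.NegR)
      qed (use D1 in auto)
    next
      case False
      then show ?thesis using F1 base less.prems by auto
    qed
  qed
qed

lemma weak: "deriv S G Dl \<Longrightarrow> boxed_ms S' \<Longrightarrow> deriv (S + S') (G + G') (Dl + Dl')"
proof (induction arbitrary: S' G' Dl' rule: deriv.induct)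
  case (Ax S p G Dl)
  then show ?case by (intro Ax') auto
next
  case (BotL S G Dl)
  then show ?case by (intro BotL') auto
next
  case (AndR S G a1 Dl a2)
  then show ?case by (simp add: deriv.AndR)
next
  case (AndL S a1 a2 G Dl)
  then show ?case by (simp add: deriv.AndL)
next
  case (OrR S G a1 a2 Dl)
  then show ?case by (simp add: deriv.OrR)
next
  case (OrL S a1 G Dl a2)
  then show ?case by (simp add: deriv.OrL)
next
  case (ImpR S a1 G a2 Dl)
  then show ?case by (simp add: deriv.ImpR)
next
  case (ImpL S G a1 Dl a2)
  then show ?case by (simp add: deriv.ImpL)
next
  case (NegR S a G Dl)
  then show ?case by (simp add: deriv.NegR)
next
  case (NegL S G a Dl)
  then show ?case by (simp add: deriv.NegL)
next
  case (DK L b Grp S P Om)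
  let ?S0 = "S + mset (map (\<lambda>(Gi, ai). D Gi ai) L)"
  have bx0: "boxed_ms ?S0" using DK.hyps(3) by (induction L) (auto simp: boxed_ms_def)
  note dec = DK_dec[OF DK.hyps(2,3)]
  have "deriv (?S0 + S'') (P + G'') (add_mset (D Grp b) Om + D'')" if "boxed_ms S''" for S'' G'' D''
  proof (rule sat[OF _ that])
    fix S' G' D' :: "'a fm multiset"
    assume b': "boxed_ms S'" and g': "\<forall>x\<in>#G'. atom_or_bot x" and d': "\<forall>x\<in>#D'. atom_or_bot x \<or> boxed x"
    have "deriv {#} (image_mset unbox (sel Grp (?S0 + S'))) {#b#}"
      using DK.IH[of "{#}" "image_mset unbox (sel Grp S')" "{#}"] dec by (simp add: sel_def)
    then show "deriv (?S0 + S') (P + G') (add_mset (D Grp b) Om + D')"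
      using DK.hyps(4,5) b' g' d' bx0 DK'[of Grp "?S0 + S'" b "P+G'" "Om + D'"] by auto
  qed
  then show ?case using DK.prems by simp
next
  case (DT Grp a S G Dl)
  then show ?case by (simp add: deriv.DT)
qed


lemma split_eq: "add_mset X G1 = add_mset T G \<Longrightarrow> X \<noteq> T \<Longrightarrow> \<exists>K. G1 = add_mset T K \<and> G = add_mset X K"
  by (auto simp: add_eq_conv_ex)

lemma inv_left:
  assumes pAnd: "\<And>S a1 a2 G Dl. T = And a1 a2 \<Longrightarrow> deriv S (add_mset a1 (add_mset a2 G)) Dl \<Longrightarrow> deriv (C+S) (A+G) (B+Dl)"
  and pOr: "\<And>S a1 a2 G Dl. T = Or a1 a2 \<Longrightarrow> deriv S (add_mset a1 G) Dl \<Longrightarrow> deriv S (add_mset a2 G) Dl \<Longrightarrow> deriv (C+S) (A+G) (B+Dl)"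
  and pImp: "\<And>S a1 a2 G Dl. T = Imp a1 a2 \<Longrightarrow> deriv S G (add_mset a1 Dl) \<Longrightarrow> deriv S (add_mset a2 G) Dl \<Longrightarrow> deriv (C+S) (A+G) (B+Dl)"
  and pNeg: "\<And>S a1 G Dl. T = Neg a1 \<Longrightarrow> deriv S G (add_mset a1 Dl) \<Longrightarrow> deriv (C+S) (A+G) (B+Dl)"
  and pDT: "\<And>S H a1 G Dl. T = D H a1 \<Longrightarrow> deriv (add_mset (D H a1) S) (add_mset a1 G) Dl \<Longrightarrow> deriv (C+S) (A+G) (B+Dl)"
  and nab: "\<not> atom_or_bot T" and bC: "boxed_ms C"
  shows "deriv S G0 Dl \<Longrightarrow> G0 = add_mset T G \<Longrightarrow> deriv (C+S) (A+G) (B+Dl)"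
proof (induction arbitrary: G rule: deriv.induct)
  case (Ax S p G1 Dl)
  then show ?case using nab bC by (intro Ax') (auto simp: add_eq_conv_ex)
next
  case (BotL S G1 Dl)
  then show ?case using nab bC by (intro BotL') (auto simp: add_eq_conv_ex)
next
  case (AndR S G1 a1 Dl a2)
  then have "deriv (C+S) (A+G) (add_mset a1 (B+Dl))" "deriv (C+S) (A+G) (add_mset a2 (B+Dl))" by auto
  then show ?case by (simp add: deriv.AndR)
next
  case (OrR S G1 a1 a2 Dl)
  then have "deriv (C+S) (A+G) (add_mset a1 (add_mset a2 (B+Dl)))" by auto
  then show ?case by (simp add: deriv.OrR)
next
  case (ImpR S a1 G1 a2 Dl)
  then have "deriv (C+S) (add_mset a1 (A+G)) (add_mset a2 (B+Dl))" by auto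
  then show ?case by (simp add: deriv.ImpR)
next
  case (NegR S a1 G1 Dl)
  then have "deriv (C+S) (add_mset a1 (A+G)) (B+Dl)" by auto
  then show ?case by (simp add: deriv.NegR)
next
  case (AndL S a1 a2 G1 Dl)
  show ?case
  proof (cases "And a1 a2 = T")
    case True then show ?thesis using AndL pAnd by auto
  next
    case False
    then obtain K where K: "G1 = add_mset T K" "G = add_mset (And a1 a2) K" using split_eq AndL.prems by metis
    have eq: "add_mset a1 (add_mset a2 G1) = add_mset T (add_mset a1 (add_mset a2 K))" unfolding K by (metis add_mset_commute)
    have "deriv (C+S) (A+add_mset a1 (add_mset a2 K)) (B+Dl)" using AndL.IH[OF eq] .
    then have "deriv (C+S) (add_mset a1 (add_mset a2 (A+K))) (B+Dl)" by simp
    then show ?thesis using K by (simp add: deriv.AndL)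
  qed
next
  case (OrL S a1 G1 Dl a2)
  show ?case
  proof (cases "Or a1 a2 = T")
    case True then show ?thesis using OrL pOr by auto
  next
    case False
    then obtain K where K: "G1 = add_mset T K" "G = add_mset (Or a1 a2) K" using split_eq OrL.prems by metis
    have "deriv (C+S) (add_mset a1 (A+K)) (B+Dl)" "deriv (C+S) (add_mset a2 (A+K)) (B+Dl)" using OrL.IH K by simp_all
    then show ?thesis using K by (simp add: deriv.OrL)
  qed
next
  case (ImpL S G1 a1 Dl a2)
  show ?case
  proof (cases "Imp a1 a2 = T")
    case True then show ?thesis using ImpL pImp by auto
  next
    case False
    then obtain K where K: "G1 = add_mset T K" "G = add_mset (Imp a1 a2) K" using split_eq ImpL.prems by metis
    have "deriv (C+S) (A+K) (add_mset a1 (B+Dl))" "deriv (C+S) (add_mset a2 (A+K)) (B+Dl)" using ImpL.IH K by simp_all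
    then show ?thesis using K by (simp add: deriv.ImpL)
  qed
next
  case (NegL S G1 a1 Dl)
  show ?case
  proof (cases "Neg a1 = T")
    case True then show ?thesis using NegL pNeg by auto
  next
    case False
    then obtain K where K: "G1 = add_mset T K" "G = add_mset (Neg a1) K" using split_eq NegL.prems by metis
    have "deriv (C+S) (A+K) (add_mset a1 (B+Dl))" using NegL.IH K by simp_all
    then show ?thesis using K by (simp add: deriv.NegL)
  qed
next
  case (DT Grp a1 S G1 Dl)
  show ?case
  proof (cases "D Grp a1 = T")
    case True then show ?thesis using DT pDT by auto
  next
    case False
    then obtain K where K: "G1 = add_mset T K" "G = add_mset (D Grp a1) K" using split_eq DT.prems by metis
    have "deriv (add_mset (D Grp a1) (C+S)) (add_mset a1 (A+K)) (B+Dl)" using DT.IH K by simp_all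
    then show ?thesis using K by (simp add: deriv.DT)
  qed
next
  case (DK L b Grp S P Om)
  then show ?case using nab by auto
qed

lemma inv_right:
  assumes pAnd: "\<And>S a1 a2 G Dl. T = And a1 a2 \<Longrightarrow> deriv S G (add_mset a1 Dl) \<Longrightarrow> deriv S G (add_mset a2 Dl) \<Longrightarrow> deriv S (A+G) (B+Dl)"
  and pOr: "\<And>S a1 a2 G Dl. T = Or a1 a2 \<Longrightarrow> deriv S G (add_mset a1 (add_mset a2 Dl)) \<Longrightarrow> deriv S (A+G) (B+Dl)"
  and pImp: "\<And>S a1 a2 G Dl. T = Imp a1 a2 \<Longrightarrow> deriv S (add_mset a1 G) (add_mset a2 Dl) \<Longrightarrow> deriv S (A+G) (B+Dl)"
  and pNeg: "\<And>S a1 G Dl. T = Neg a1 \<Longrightarrow> deriv S (add_mset a1 G) Dl \<Longrightarrow> deriv S (A+G) (B+Dl)"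
  and nab: "\<not> atom_or_bot T" "\<not> boxed T"
  shows "deriv S G Dl0 \<Longrightarrow> Dl0 = add_mset T Dl \<Longrightarrow> deriv S (A+G) (B+Dl)"
proof (induction arbitrary: Dl rule: deriv.induct)
  case (Ax S p G1 Dl1)
  then show ?case using nab by (intro Ax') (auto simp: add_eq_conv_ex)
next
  case (BotL S G1 Dl1)
  then show ?case by (intro BotL') auto
next
  case (AndL S a1 a2 G1 Dl1)
  then have "deriv S (add_mset a1 (add_mset a2 (A+G1))) (B+Dl)" by auto
  then show ?case by (simp add: deriv.AndL)
next
  case (OrL S a1 G1 Dl1 a2)
  then have "deriv S (add_mset a1 (A+G1)) (B+Dl)" "deriv S (add_mset a2 (A+G1)) (B+Dl)" by auto
  then show ?case by (simp add: deriv.OrL)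
next
  case (ImpL S G1 a1 Dl1 a2)
  then have "deriv S (A+G1) (add_mset a1 (B+Dl))" "deriv S (add_mset a2 (A+G1)) (B+Dl)" by auto
  then show ?case by (simp add: deriv.ImpL)
next
  case (NegL S G1 a1 Dl1)
  then have "deriv S (A+G1) (add_mset a1 (B+Dl))" by auto
  then show ?case by (simp add: deriv.NegL)
next
  case (DT Grp a1 S G1 Dl1)
  then have "deriv (add_mset (D Grp a1) S) (add_mset a1 (A+G1)) (B+Dl)" by auto
  then show ?case by (simp add: deriv.DT)
next
  case (AndR S G1 a1 Dl1 a2)
  show ?case
  proof (cases "And a1 a2 = T")
    case True then show ?thesis using AndR pAnd by auto
  next
    case False
    then obtain K where K: "Dl1 = add_mset T K" "Dl = add_mset (And a1 a2) K" using split_eq AndR.prems by metis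
    have "deriv S (A+G1) (add_mset a1 (B+K))" "deriv S (A+G1) (add_mset a2 (B+K))" using AndR.IH K by simp_all
    then show ?thesis using K by (simp add: deriv.AndR)
  qed
next
  case (OrR S G1 a1 a2 Dl1)
  show ?case
  proof (cases "Or a1 a2 = T")
    case True then show ?thesis using OrR pOr by auto
  next
    case False
    then obtain K where K: "Dl1 = add_mset T K" "Dl = add_mset (Or a1 a2) K" using split_eq OrR.prems by metis
    have "deriv S (A+G1) (add_mset a1 (add_mset a2 (B+K)))" using OrR.IH K by (simp add: add_mset_commute)
    then show ?thesis using K by (simp add: deriv.OrR)
  qed
next
  case (ImpR S a1 G1 a2 Dl1)
  show ?case
  proof (cases "Imp a1 a2 = T")
    case True then show ?thesis using ImpR pImp by auto
  next
    case False
    then obtain K where K: "Dl1 = add_mset T K" "Dl = add_mset (Imp a1 a2) K" using split_eq ImpR.prems by metis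
    have "deriv S (add_mset a1 (A+G1)) (add_mset a2 (B+K))" using ImpR.IH K by simp_all
    then show ?thesis using K by (simp add: deriv.ImpR)
  qed
next
  case (NegR S a1 G1 Dl1)
  show ?case
  proof (cases "Neg a1 = T")
    case True then show ?thesis using NegR pNeg by auto
  next
    case False
    then obtain K where K: "Dl1 = add_mset T K" "Dl = add_mset (Neg a1) K" using split_eq NegR.prems by metis
    have "deriv S (add_mset a1 (A+G1)) (B+K)" using NegR.IH K by simp_all
    then show ?thesis using K by (simp add: deriv.NegR)
  qed
next
  case (DK L b Grp S P Om)
  then show ?case using nab by (auto simp: add_eq_conv_ex)
qed

lemma inv_AndL: "deriv S (add_mset (And x y) G) Dl \<Longrightarrow> deriv S (add_mset x (add_mset y G)) Dl"
  using inv_left[of "And x y" "{#}" "{#x,y#}" "{#}", OF _ _ _ _ _ _ _ _ refl] by auto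
lemma inv_OrL: "deriv S (add_mset (Or x y) G) Dl \<Longrightarrow> deriv S (add_mset x G) Dl \<and> deriv S (add_mset y G) Dl"
  using inv_left[of "Or x y" "{#}" "{#x#}" "{#}", OF _ _ _ _ _ _ _ _ refl]
    inv_left[of "Or x y" "{#}" "{#y#}" "{#}", OF _ _ _ _ _ _ _ _ refl] by auto
lemma inv_ImpL: "deriv S (add_mset (Imp x y) G) Dl \<Longrightarrow> deriv S G (add_mset x Dl) \<and> deriv S (add_mset y G) Dl"
  using inv_left[of "Imp x y" "{#}" "{#}" "{#x#}", OF _ _ _ _ _ _ _ _ refl]
    inv_left[of "Imp x y" "{#}" "{#y#}" "{#}", OF _ _ _ _ _ _ _ _ refl] by auto
lemma inv_NegL: "deriv S (add_mset (Neg x) G) Dl \<Longrightarrow> deriv S G (add_mset x Dl)"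
  using inv_left[of "Neg x" "{#}" "{#}" "{#x#}", OF _ _ _ _ _ _ _ _ refl] by auto
lemma inv_DT: "deriv S (add_mset (D H x) G) Dl \<Longrightarrow> deriv (add_mset (D H x) S) (add_mset x G) Dl"
  using inv_left[of "D H x" "{#D H x#}" "{#x#}" "{#}", OF _ _ _ _ _ _ _ _ refl] by auto
lemma inv_AndR: "deriv S G (add_mset (And x y) Dl) \<Longrightarrow> deriv S G (add_mset x Dl) \<and> deriv S G (add_mset y Dl)"
  using inv_right[of "And x y" "{#}" "{#x#}", OF _ _ _ _ _ _ _ refl]
    inv_right[of "And x y" "{#}" "{#y#}", OF _ _ _ _ _ _ _ refl] by auto
lemma inv_OrR: "deriv S G (add_mset (Or x y) Dl) \<Longrightarrow> deriv S G (add_mset x (add_mset y Dl))"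
  using inv_right[of "Or x y" "{#}" "{#x,y#}", OF _ _ _ _ _ _ _ refl] by auto
lemma inv_ImpR: "deriv S G (add_mset (Imp x y) Dl) \<Longrightarrow> deriv S (add_mset x G) (add_mset y Dl)"
  using inv_right[of "Imp x y" "{#x#}" "{#y#}", OF _ _ _ _ _ _ _ refl] by auto
lemma inv_NegR: "deriv S G (add_mset (Neg x) Dl) \<Longrightarrow> deriv S (add_mset x G) Dl"
  using inv_right[of "Neg x" "{#x#}" "{#}", OF _ _ _ _ _ _ _ refl] by auto


fun w :: "'a fm \<Rightarrow> nat" where
  "w (Var q) = 1" | "w Bot = 1" | "w (And x y) = w x + w y + 1" | "w (Or x y) = w x + w y + 1"
| "w (Imp x y) = w x + w y + 1" | "w (Neg x) = w x + 1" | "w (D G x) = 2 * w x + 2"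

definition v :: "'a fm \<Rightarrow> nat" where "v x = w (unbox x) + 1"

definition mu :: "'a fm multiset \<Rightarrow> 'a fm multiset \<Rightarrow> 'a fm multiset \<Rightarrow> nat" where
  "mu S G Dl = sum_mset (image_mset v S) + sum_mset (image_mset w G) + sum_mset (image_mset w Dl)"

definition UI :: "nat \<Rightarrow> 'a \<Rightarrow> 'a fm multiset \<Rightarrow> 'a fm multiset \<Rightarrow> 'a fm multiset \<Rightarrow> 'a fm \<Rightarrow> bool" where
  "UI p a S G Dl A \<longleftrightarrow> wf A
    \<and> vars A \<subseteq> vars_ms (S + G + Dl) - {p}
    \<and> agts A \<subseteq> agts_ms (S + G + Dl) - {a}
    \<and> deriv S (add_mset A G) Dl
    \<and> (\<forall>Pi Lm Th. wf_ms Pi \<and> wf_ms Lm \<and> wf_ms Th \<and> boxed_ms Th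
          \<and> p \<notin> vars_ms (Pi + Lm + Th) \<and> a \<notin> agts_ms (Pi + Lm + Th)
          \<and> deriv (Th + S) (Pi + G) (Dl + Lm)
          \<longrightarrow> deriv Th Pi (add_mset A Lm))"

lemma vars_ms_simps[simp]: "vars_ms (add_mset x M) = vars x \<union> vars_ms M" "vars_ms (M + N) = vars_ms M \<union> vars_ms N"
  "vars_ms {#} = {}"
  by (auto simp: vars_ms_def)
lemma agts_ms_simps[simp]: "agts_ms (add_mset x M) = agts x \<union> agts_ms M" "agts_ms (M + N) = agts_ms M \<union> agts_ms N"
  "agts_ms {#} = {}"
  by (auto simp: agts_ms_def)
lemma wf_ms_simps[simp]: "wf_ms (add_mset x M) = (wf x \<and> wf_ms M)" "wf_ms (M + N) = (wf_ms M \<and> wf_ms N)"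
  "wf_ms {#}"
  by (auto simp: wf_ms_def)

lemma step1:
  assumes ui: "UI p a S1 G1 D1 A"
  and vs: "vars_ms (S1+G1+D1) \<subseteq> vars_ms (S+G+Dl)" and ags: "agts_ms (S1+G1+D1) \<subseteq> agts_ms (S+G+Dl)"
  and fwd: "\<And>X. deriv S1 (X + G1) D1 \<Longrightarrow> deriv S (X + G) Dl"
  and inv: "\<And>Th Pi Lm. deriv (Th+S) (Pi+G) (Dl+Lm) \<Longrightarrow> deriv (Th+S1) (Pi+G1) (D1+Lm)"
  shows "UI p a S G Dl A"
proof -
  have "deriv S (add_mset A G) Dl" using fwd[of "{#A#}"] ui by (simp add: UI_def)
  then show ?thesis using ui vs ags inv unfolding UI_def by blast
qed

lemma step2:
  assumes ui1: "UI p a S1 G1 D1 A1" and ui2: "UI p a S2 G2 D2 A2"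
  and vs: "vars_ms (S1+G1+D1) \<subseteq> vars_ms (S+G+Dl)" "vars_ms (S2+G2+D2) \<subseteq> vars_ms (S+G+Dl)"
  and ags: "agts_ms (S1+G1+D1) \<subseteq> agts_ms (S+G+Dl)" "agts_ms (S2+G2+D2) \<subseteq> agts_ms (S+G+Dl)"
  and fwd: "\<And>X. deriv S1 (X + G1) D1 \<Longrightarrow> deriv S2 (X + G2) D2 \<Longrightarrow> deriv S (X + G) Dl"
  and inv1: "\<And>Th Pi Lm. deriv (Th+S) (Pi+G) (Dl+Lm) \<Longrightarrow> deriv (Th+S1) (Pi+G1) (D1+Lm)"
  and inv2: "\<And>Th Pi Lm. deriv (Th+S) (Pi+G) (Dl+Lm) \<Longrightarrow> deriv (Th+S2) (Pi+G2) (D2+Lm)"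
  shows "UI p a S G Dl (And A1 A2)"
proof -
  have d1: "deriv S1 (add_mset A1 G1) D1" and d2: "deriv S2 (add_mset A2 G2) D2" using ui1 ui2 by (auto simp: UI_def)
  have "deriv S1 ({#A1, A2#} + G1) D1" using weak[OF d1, of "{#}" "{#A2#}" "{#}"] by (simp add: add_mset_commute)
  moreover have "deriv S2 ({#A1, A2#} + G2) D2" using weak[OF d2, of "{#}" "{#A1#}" "{#}"] by simp
  ultimately have "deriv S ({#A1, A2#} + G) Dl" by (rule fwd)
  then have ii: "deriv S (add_mset (And A1 A2) G) Dl" by (simp add: deriv.AndL)
  have iii: "deriv Th Pi (add_mset (And A1 A2) Lm)"
    if "wf_ms Pi \<and> wf_ms Lm \<and> wf_ms Th \<and> boxed_ms Th
          \<and> p \<notin> vars_ms (Pi + Lm + Th) \<and> a \<notin> agts_ms (Pi + Lm + Th)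
          \<and> deriv (Th + S) (Pi + G) (Dl + Lm)" for Pi Lm Th
  proof -
    have "deriv Th Pi (add_mset A1 Lm)" using ui1 inv1 that unfolding UI_def by blast
    moreover have "deriv Th Pi (add_mset A2 Lm)" using ui2 inv2 that unfolding UI_def by blast
    ultimately show ?thesis by (rule deriv.AndR)
  qed
  show ?thesis unfolding UI_def using ui1 ui2 vs ags ii iii by (auto simp: UI_def)
qed

lemma Top_UI:
  assumes "deriv S G Dl"
  shows "UI p a S G Dl (Neg Bot)"
proof -
  have "deriv S (add_mset (Neg Bot) G) Dl" using weak[OF assms, of "{#}" "{#Neg Bot#}" "{#}"] by simp
  moreover have "deriv Th Pi (add_mset (Neg Bot) Lm)" if "boxed_ms Th" for Th Pi Lm
    using that by (intro deriv.NegR deriv.BotL)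
  ultimately show ?thesis unfolding UI_def by auto
qed

definition disj :: "'a fm list \<Rightarrow> 'a fm" where
  "disj xs = foldr Or xs Bot"

lemma disj_left: "boxed_ms S \<Longrightarrow> \<forall>d\<in>set xs. deriv S (add_mset d G) Dl \<Longrightarrow> deriv S (add_mset (disj xs) G) Dl"
  unfolding disj_def by (induction xs) (auto intro: deriv.OrL deriv.BotL)

lemma disj_right: "d \<in> set xs \<Longrightarrow> deriv S G (add_mset d Dl) \<Longrightarrow> deriv S G (add_mset (disj xs) Dl)"
proof (induction xs arbitrary: Dl)
  case Nil then show ?case by simp
next
  case (Cons x xs)
  have bS: "boxed_ms S" using Cons.prems deriv_boxed by blast
  have "deriv S G (add_mset x (add_mset (disj xs) Dl))"
  proof (cases "d = x")
    case True
    then show ?thesis using weak[OF Cons.prems(2), of "{#}" "{#}" "{#disj xs#}"] by (simp add: add_mset_commute)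
  next
    case False
    then have "deriv S G (add_mset (disj xs) Dl)" using Cons by auto
    then show ?thesis using weak[of S G "add_mset (disj xs) Dl" "{#}" "{#}" "{#x#}"] by simp
  qed
  then show ?case unfolding disj_def by (simp add: deriv.OrR)
qed

lemma disj_props: "vars (disj xs) = (\<Union>x\<in>set xs. vars x)" "agts (disj xs) = (\<Union>x\<in>set xs. agts x)"
  "wf (disj xs) = (\<forall>x\<in>set xs. wf x)"
  unfolding disj_def by (induction xs) auto


lemma sel_simps[simp]: "sel G0 (add_mset x M) = (if grp x \<subseteq> G0 then add_mset x (sel G0 M) else sel G0 M)"
  "sel G0 (M + N) = sel G0 M + sel G0 N" "sel G0 {#} = {#}"
  by (auto simp: sel_def)

lemma grp_agts: "grp x \<subseteq> agts x" by (cases x) auto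
lemma unbox_vars: "vars (unbox x) \<subseteq> vars x" by (cases x) auto
lemma unbox_agts: "agts (unbox x) \<subseteq> agts x" by (cases x) auto
lemma unbox_wf: "wf x \<Longrightarrow> wf (unbox x)" by (cases x) auto
lemma grp_ne: "wf x \<Longrightarrow> boxed x \<Longrightarrow> grp x \<noteq> {}" by (cases x) auto

lemma sel_sub: "sel G0 M \<subseteq># M" by (simp add: sel_def)

lemma vars_ms_mono: "M \<subseteq># N \<Longrightarrow> vars_ms M \<subseteq> vars_ms N"
  by (auto simp: vars_ms_def dest: mset_subset_eqD)
lemma agts_ms_mono: "M \<subseteq># N \<Longrightarrow> agts_ms M \<subseteq> agts_ms N"
  by (auto simp: agts_ms_def dest: mset_subset_eqD)

lemma vars_unbox_sel: "vars_ms (image_mset unbox (sel G0 M)) \<subseteq> vars_ms M"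
  using unbox_vars by (auto simp: vars_ms_def sel_def)
lemma agts_unbox: "agts_ms (image_mset unbox M) \<subseteq> agts_ms M"
  unfolding agts_ms_def using unbox_agts by fastforce
lemma agts_unbox_sel: "agts_ms (image_mset unbox (sel G0 M)) \<subseteq> agts_ms M"
  by (meson agts_unbox agts_ms_mono sel_sub order_trans)
lemma wf_unbox_sel: "wf_ms M \<Longrightarrow> wf_ms (image_mset unbox (sel G0 M))"
  using unbox_wf by (auto simp: wf_ms_def sel_def)

lemma sel_afree: "a \<notin> agts_ms Th \<Longrightarrow> sel (G0 - {a}) Th = sel G0 Th"
proof -
  assume h: "a \<notin> agts_ms Th"
  have "a \<notin> grp x" if "x \<in># Th" for x using h grp_agts[of x] that unfolding agts_ms_def by auto
  then show ?thesis unfolding sel_def by (intro filter_mset_cong0) (metis Diff_empty subset_Diff_insert)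
qed

lemma sel_empty: "wf_ms Th \<Longrightarrow> boxed_ms Th \<Longrightarrow> sel {} Th = {#}"
  unfolding sel_def wf_ms_def boxed_ms_def using grp_ne by (auto simp: filter_mset_eq_conv)

lemma sel_union: "sel (\<Union>(grp ` set_mset (sel G0 S))) S = sel G0 S"
  unfolding sel_def by (intro filter_mset_cong0) fastforce

lemma add_split: "add_mset X D1 = M + N \<Longrightarrow> X \<notin># M \<Longrightarrow> \<exists>N'. N = add_mset X N' \<and> D1 = M + N'"
proof -
  assume h: "add_mset X D1 = M + N" "X \<notin># M"
  then have "X \<in># N" by (metis add_mset_add_single union_iff union_single_eq_member)
  then obtain N' where "N = add_mset X N'" by (metis multi_member_split)
  with h show ?thesis by auto
qed

lemma add_split2: "add_mset X D1 = M + N \<Longrightarrow> X \<notin># M \<Longrightarrow> \<exists>N'. N = add_mset X N' \<and> D1 = N' + M"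
  using add_split by (metis add.commute)


lemma mem_vars: "x \<in># M \<Longrightarrow> vars x \<subseteq> vars_ms M" by (auto simp: vars_ms_def)
lemma mem_agts: "x \<in># M \<Longrightarrow> agts x \<subseteq> agts_ms M" by (auto simp: agts_ms_def)
lemma mem_wf: "x \<in># M \<Longrightarrow> wf_ms M \<Longrightarrow> wf x" by (auto simp: wf_ms_def)

lemma add_split3: "add_mset X D1 = N + M \<Longrightarrow> X \<notin># M \<Longrightarrow> \<exists>N'. N = add_mset X N' \<and> D1 = N' + M"
  using add_split[of X D1 M N] by (simp add: add.commute)

lemma dcong: "deriv S G M \<Longrightarrow> G = G' \<Longrightarrow> M = M' \<Longrightarrow> deriv S G' M'" by simp

lemma irred_iii:
  fixes S G Dl :: "'a fm multiset" and A :: "'a fm" and F :: "'a fm set"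
  assumes atG: "\<forall>x\<in>#G. atom_or_bot x" and atD: "\<forall>x\<in>#Dl. atom_or_bot x \<or> boxed x"
  and nd: "\<not> deriv S G Dl" and bS: "boxed_ms S" and wS: "wf_ms S"
  and hw: "\<And>Th Pi Lm. deriv Th Pi Lm \<Longrightarrow> deriv Th Pi (add_mset A Lm)"
  and hF: "\<And>d Th Pi Lm. d \<in> F \<Longrightarrow> deriv Th Pi (add_mset d Lm) \<Longrightarrow> deriv Th Pi (add_mset A Lm)"
  and F1: "\<And>q. Var q \<in># Dl \<Longrightarrow> q \<noteq> p \<Longrightarrow> Var q \<in> F"
  and F2: "\<And>q. Var q \<in># G \<Longrightarrow> q \<noteq> p \<Longrightarrow> Neg (Var q) \<in> F"
  and F3: "\<And>G0 \<beta>. D G0 \<beta> \<in># Dl \<Longrightarrow> G0 - {a} \<noteq> {} \<Longrightarrow> D (G0 - {a}) (fB G0 \<beta>) \<in> F"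
  and F4: "\<And>G0. a \<notin> G0 \<Longrightarrow> sel G0 S \<noteq> {#} \<Longrightarrow> Neg (D (\<Union>(grp ` set_mset (sel G0 S))) (Neg (fC G0))) \<in> F"
  and uB: "\<And>G0 \<beta>. D G0 \<beta> \<in># Dl \<Longrightarrow> UI p a {#} (image_mset unbox (sel G0 S)) {#\<beta>#} (fB G0 \<beta>)"
  and uC: "\<And>G0. sel G0 S \<noteq> {#} \<Longrightarrow> UI p a {#} (image_mset unbox (sel G0 S)) {#} (fC G0)"
  shows "deriv S0 X0 Y0 \<Longrightarrow> S0 = Th + S \<Longrightarrow> X0 = Pi + G \<Longrightarrow> Y0 = Dl + Lm \<Longrightarrow> wf_ms Pi \<Longrightarrow> wf_ms Lm
     \<Longrightarrow> wf_ms Th \<Longrightarrow> boxed_ms Th \<Longrightarrow> p \<notin> vars_ms (Pi + Lm + Th) \<Longrightarrow> a \<notin> agts_ms (Pi + Lm + Th)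
     \<Longrightarrow> deriv Th Pi (add_mset A Lm)"
proof (induction arbitrary: Th Pi Lm rule: deriv.induct)
  case (Ax S0 q G1 D1)
  have q1: "Var q \<in># Pi + G" "Var q \<in># Dl + Lm" using Ax.prems(2,3) by (metis union_single_eq_member)+
  have bT: "boxed_ms Th" using Ax.prems(7) .
  show ?case
  proof (cases "Var q \<in># Pi")
    case True
    show ?thesis
    proof (cases "Var q \<in># Lm")
      case True
      show ?thesis by (rule Ax'[OF \<open>Var q \<in># Pi\<close>]) (simp_all add: True bT)
    next
      case False
      then have qD: "Var q \<in># Dl" using q1 by simp
      have "q \<noteq> p" using mem_vars[OF True] Ax.prems(8) by auto
      then have inF: "Var q \<in> F" using F1 qD by blast
      have "deriv Th Pi (add_mset (Var q) Lm)" by (rule Ax'[OF True]) (simp_all add: bT)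
      then show ?thesis by (rule hF[OF inF])
    qed
  next
    case False
    then have qG: "Var q \<in># G" using q1 by simp
    show ?thesis
    proof (cases "Var q \<in># Lm")
      case True
      have "q \<noteq> p" using mem_vars[OF True] Ax.prems(8) by auto
      then have inF: "Neg (Var q) \<in> F" using F2 qG by blast
      have "deriv Th (add_mset (Var q) Pi) Lm" by (rule Ax'[OF _ True bT]) simp
      then have "deriv Th Pi (add_mset (Neg (Var q)) Lm)" by (rule deriv.NegR)
      then show ?thesis by (rule hF[OF inF])
    next
      case False
      then have "Var q \<in># Dl" using q1 by simp
      then have "deriv S G Dl" by (rule Ax'[OF qG _ bS])
      then show ?thesis using nd by blast
    qed
  qed
next
  case (BotL S0 G1 D1)
  have "Bot \<in># Pi \<or> Bot \<in># G" using BotL.prems(2) by (metis union_single_eq_member union_iff)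
  then show ?case
  proof
    assume "Bot \<in># Pi" then show ?thesis using BotL.prems(7) by (rule BotL')
  next
    assume "Bot \<in># G" then have "deriv S G Dl" using bS by (rule BotL')
    then show ?thesis using nd by blast
  qed
next
  case (AndR S0 G1 a1 D1 a2)
  have "And a1 a2 \<notin># Dl" using atD by auto
  then obtain Lm' where L: "Lm = add_mset (And a1 a2) Lm'" "D1 = Dl + Lm'" using add_split[OF AndR.prems(3)] by blast
  have h1: "deriv Th Pi (add_mset A (add_mset a1 Lm'))"
    by (rule AndR.IH) (use AndR.prems L in simp_all)
  have h2: "deriv Th Pi (add_mset A (add_mset a2 Lm'))"
    by (rule AndR.IH) (use AndR.prems L in simp_all)
  have g1: "deriv Th Pi (add_mset a1 (add_mset A Lm'))" by (rule dcong[OF h1]) (auto simp: multiset_eq_iff)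
  have g2: "deriv Th Pi (add_mset a2 (add_mset A Lm'))" by (rule dcong[OF h2]) (auto simp: multiset_eq_iff)
  have "deriv Th Pi (add_mset (And a1 a2) (add_mset A Lm'))" using g1 g2 by (rule deriv.AndR)
  then show ?case unfolding L by (rule dcong) (auto simp: multiset_eq_iff)
next
  case (OrR S0 G1 a1 a2 D1)
  have "Or a1 a2 \<notin># Dl" using atD by auto
  then obtain Lm' where L: "Lm = add_mset (Or a1 a2) Lm'" "D1 = Dl + Lm'" using add_split[OF OrR.prems(3)] by blast
  have h3: "deriv Th Pi (add_mset A (add_mset a1 (add_mset a2 Lm')))"
    by (rule OrR.IH) (use OrR.prems L in simp_all)
  have g1: "deriv Th Pi (add_mset a1 (add_mset a2 (add_mset A Lm')))" by (rule dcong[OF h3]) (auto simp: multiset_eq_iff)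
  have "deriv Th Pi (add_mset (Or a1 a2) (add_mset A Lm'))" using g1 by (rule deriv.OrR)
  then show ?case unfolding L by (rule dcong) (auto simp: multiset_eq_iff)
next
  case (ImpR S0 a1 G1 a2 D1)
  have "Imp a1 a2 \<notin># Dl" using atD by auto
  then obtain Lm' where L: "Lm = add_mset (Imp a1 a2) Lm'" "D1 = Dl + Lm'" using add_split[OF ImpR.prems(3)] by blast
  have h4: "deriv Th (add_mset a1 Pi) (add_mset A (add_mset a2 Lm'))"
    by (rule ImpR.IH) (use ImpR.prems L in simp_all)
  have g1: "deriv Th (add_mset a1 Pi) (add_mset a2 (add_mset A Lm'))" by (rule dcong[OF h4]) (auto simp: multiset_eq_iff)
  have "deriv Th Pi (add_mset (Imp a1 a2) (add_mset A Lm'))" using g1 by (rule deriv.ImpR)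
  then show ?case unfolding L by (rule dcong) (auto simp: multiset_eq_iff)
next
  case (NegR S0 a1 G1 D1)
  have "Neg a1 \<notin># Dl" using atD by auto
  then obtain Lm' where L: "Lm = add_mset (Neg a1) Lm'" "D1 = Dl + Lm'" using add_split[OF NegR.prems(3)] by blast
  have h5: "deriv Th (add_mset a1 Pi) (add_mset A Lm')"
    by (rule NegR.IH) (use NegR.prems L in simp_all)
  have "deriv Th Pi (add_mset (Neg a1) (add_mset A Lm'))" using h5 by (rule deriv.NegR)
  then show ?case unfolding L by (rule dcong) (auto simp: multiset_eq_iff)
next
  case (AndL S0 a1 a2 G1 D1)
  have "And a1 a2 \<notin># G" using atG by auto
  then obtain Pi' where L: "Pi = add_mset (And a1 a2) Pi'" "G1 = Pi' + G" using add_split3[OF AndL.prems(2)] by blast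
  have h6: "deriv Th (add_mset a1 (add_mset a2 Pi')) (add_mset A Lm)"
    by (rule AndL.IH) (use AndL.prems L in simp_all)
  show ?case unfolding L using h6 by (rule deriv.AndL)
next
  case (OrL S0 a1 G1 D1 a2)
  have "Or a1 a2 \<notin># G" using atG by auto
  then obtain Pi' where L: "Pi = add_mset (Or a1 a2) Pi'" "G1 = Pi' + G" using add_split3[OF OrL.prems(2)] by blast
  have h7: "deriv Th (add_mset a1 Pi') (add_mset A Lm)"
    by (rule OrL.IH) (use OrL.prems L in simp_all)
  have h8: "deriv Th (add_mset a2 Pi') (add_mset A Lm)"
    by (rule OrL.IH) (use OrL.prems L in simp_all)
  show ?case unfolding L using h7 h8 by (rule deriv.OrL)
next
  case (ImpL S0 G1 a1 D1 a2)
  have "Imp a1 a2 \<notin># G" using atG by auto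
  then obtain Pi' where L: "Pi = add_mset (Imp a1 a2) Pi'" "G1 = Pi' + G" using add_split3[OF ImpL.prems(2)] by blast
  have h9: "deriv Th Pi' (add_mset A (add_mset a1 Lm))"
    by (rule ImpL.IH) (use ImpL.prems L in simp_all)
  have h10: "deriv Th (add_mset a2 Pi') (add_mset A Lm)"
    by (rule ImpL.IH) (use ImpL.prems L in simp_all)
  have g1: "deriv Th Pi' (add_mset a1 (add_mset A Lm))" by (rule dcong[OF h9]) (auto simp: multiset_eq_iff)
  show ?case unfolding L using g1 h10 by (rule deriv.ImpL)
next
  case (NegL S0 G1 a1 D1)
  have "Neg a1 \<notin># G" using atG by auto
  then obtain Pi' where L: "Pi = add_mset (Neg a1) Pi'" "G1 = Pi' + G" using add_split3[OF NegL.prems(2)] by blast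
  have h11: "deriv Th Pi' (add_mset A (add_mset a1 Lm))"
    by (rule NegL.IH) (use NegL.prems L in simp_all)
  have g1: "deriv Th Pi' (add_mset a1 (add_mset A Lm))" by (rule dcong[OF h11]) (auto simp: multiset_eq_iff)
  show ?case unfolding L using g1 by (rule deriv.NegL)
next
  case (DT Grp a1 S0 G1 D1)
  have "D Grp a1 \<notin># G" using atG by auto
  then obtain Pi' where L: "Pi = add_mset (D Grp a1) Pi'" "G1 = Pi' + G" using add_split3[OF DT.prems(2)] by blast
  have h12: "deriv (add_mset (D Grp a1) Th) (add_mset a1 Pi') (add_mset A Lm)"
    by (rule DT.IH) (use DT.prems L in simp_all)
  show ?case unfolding L using h12 by (rule deriv.DT)
next
  case (DK L b Grp S1 P Om)
  note dec = DK_dec[OF DK.hyps(2,3)]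
  have prem: "deriv {#} (image_mset unbox (sel Grp Th) + image_mset unbox (sel Grp S)) {#b#}"
  proof -
    have e: "image_mset unbox (sel Grp (Th + S)) = mset (map snd L)" using dec(2) unfolding DK.prems(1) .
    show ?thesis using DK.hyps(1) e[symmetric] by simp
  qed
  have PiAt: "\<forall>x\<in>#Pi. atom_or_bot x" using DK.hyps(4) DK.prems(2) by auto
  have OmAt: "\<forall>x\<in>#Om. atom_or_bot x \<or> boxed x" using DK.hyps(5) by auto
  have wT: "wf_ms (image_mset unbox (sel Grp Th))" using DK.prems wf_unbox_sel by blast
  have pT: "p \<notin> vars_ms (image_mset unbox (sel Grp Th))" using DK.prems(8) vars_unbox_sel by fastforce
  have aT: "a \<notin> agts_ms (image_mset unbox (sel Grp Th))" using DK.prems(9) agts_unbox_sel by fastforce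
  have aTh: "a \<notin> agts_ms Th" using DK.prems(9) by simp
  have wTh: "wf_ms Th" "boxed_ms Th" using DK.prems(6,7) by auto
  show ?case
  proof (cases "D Grp b \<in># Dl")
    case True
    then obtain Dl' where Dl': "Dl = add_mset (D Grp b) Dl'" by (metis multi_member_split)
    have OmE: "Om = Dl' + Lm" using DK.prems(3) Dl' by simp
    show ?thesis
    proof (cases "Grp - {a} = {}")
      case True
      have "sel Grp Th = sel (Grp - {a}) Th" using sel_afree[OF aTh] by simp
      also have "\<dots> = {#}" using True sel_empty[OF wTh] by metis
      finally have "deriv {#} (image_mset unbox (sel Grp S)) {#b#}" using prem by simp
      then have "deriv S G (add_mset (D Grp b) Dl')" using bS atG OmAt OmE by (intro DK') auto
      then show ?thesis using nd Dl' by simp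
    next
      case False
      have u: "UI p a {#} (image_mset unbox (sel Grp S)) {#b#} (fB Grp b)" using uB True .
      have u3: "\<And>Pi Lm Th. wf_ms Pi \<and> wf_ms Lm \<and> wf_ms Th \<and> boxed_ms Th
          \<and> p \<notin> vars_ms (Pi + Lm + Th) \<and> a \<notin> agts_ms (Pi + Lm + Th)
          \<and> deriv (Th + {#}) (Pi + image_mset unbox (sel Grp S)) ({#b#} + Lm)
          \<longrightarrow> deriv Th Pi (add_mset (fB Grp b) Lm)" using u unfolding UI_def by blast
      have "deriv {#} (image_mset unbox (sel Grp Th)) (add_mset (fB Grp b) {#})"
        using u3[of "image_mset unbox (sel Grp Th)" "{#}" "{#}"] prem wT pT aT by simp
      then have "deriv {#} (image_mset unbox (sel (Grp - {a}) Th)) {#fB Grp b#}"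
        using sel_afree[OF aTh] by simp
      then have "deriv Th Pi (add_mset (D (Grp - {a}) (fB Grp b)) Lm)"
        using DK.prems PiAt OmAt OmE by (intro DK') auto
      then show ?thesis using hF F3 True False by blast
    qed
  next
    case False
    then obtain Lm' where Lm': "Lm = add_mset (D Grp b) Lm'" "Om = Dl + Lm'" using add_split[OF DK.prems(3)] by blast
    have aG: "a \<notin> Grp" using DK.prems(9) Lm' by auto
    have pb: "p \<notin> vars b" "a \<notin> agts b" "wf b" using DK.prems Lm' by auto
    show ?thesis
    proof (cases "sel Grp S = {#}")
      case True
      then have "deriv Th Pi (add_mset (D Grp b) Lm')" using prem DK.prems PiAt OmAt Lm' by (intro DK') auto
      then show ?thesis using hw Lm' by simp
    next
      case False
      define G' where "G' = \<Union>(grp ` set_mset (sel Grp S))"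
      have G'sub: "G' \<subseteq> Grp" unfolding G'_def by (auto simp: sel_def)
      have u: "UI p a {#} (image_mset unbox (sel Grp S)) {#} (fC Grp)" using uC False .
      have u3: "\<And>Pi Lm Th. wf_ms Pi \<and> wf_ms Lm \<and> wf_ms Th \<and> boxed_ms Th
          \<and> p \<notin> vars_ms (Pi + Lm + Th) \<and> a \<notin> agts_ms (Pi + Lm + Th)
          \<and> deriv (Th + {#}) (Pi + image_mset unbox (sel Grp S)) ({#} + Lm)
          \<longrightarrow> deriv Th Pi (add_mset (fC Grp) Lm)" using u unfolding UI_def by blast
      have "deriv {#} (image_mset unbox (sel Grp Th)) (add_mset (fC Grp) {#b#})"
        using u3[of "image_mset unbox (sel Grp Th)" "{#b#}" "{#}"] prem wT pT aT pb by simp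
      then have "deriv {#} (add_mset (Neg (fC Grp)) (image_mset unbox (sel Grp Th))) {#b#}"
        by (rule deriv.NegL)
      then have "deriv {#} (image_mset unbox (sel Grp (add_mset (D G' (Neg (fC Grp))) Th))) {#b#}"
        using G'sub by simp
      then have "deriv (add_mset (D G' (Neg (fC Grp))) Th) Pi (add_mset (D Grp b) Lm')"
        using DK.prems PiAt OmAt Lm' by (intro DK') auto
      then have "deriv (add_mset (D G' (Neg (fC Grp))) Th + {#}) (Pi + {#Neg (fC Grp)#}) (add_mset (D Grp b) Lm' + {#})"
        using weak by (metis boxed_ms_simps(3))
      then have "deriv (add_mset (D G' (Neg (fC Grp))) Th) (add_mset (Neg (fC Grp)) Pi) Lm"
        using Lm' by simp
      then have "deriv Th (add_mset (D G' (Neg (fC Grp))) Pi) Lm" by (rule deriv.DT)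
      then have "deriv Th Pi (add_mset (Neg (D G' (Neg (fC Grp)))) Lm)" by (rule deriv.NegR)
      then show ?thesis using hF F4[OF aG False] G'_def by blast
    qed
  qed
qed


lemma finite_set_fm_type: "finite (UNIV :: ('a::finite) set set)" by simp

lemma irred:
  fixes S G Dl :: "('a::finite) fm multiset"
  assumes wS: "wf_ms S" and wG: "wf_ms G" and wD: "wf_ms Dl" and bS: "boxed_ms S"
  and atG: "\<forall>x\<in>#G. atom_or_bot x" and atD: "\<forall>x\<in>#Dl. atom_or_bot x \<or> boxed x"
  and nd: "\<not> deriv S G Dl"
  and IHB: "\<And>G0 \<beta>. D G0 \<beta> \<in># Dl \<Longrightarrow> \<exists>B. UI p a {#} (image_mset unbox (sel G0 S)) {#\<beta>#} B"
  and IHC: "\<And>G0. sel G0 S \<noteq> {#} \<Longrightarrow> \<exists>C. UI p a {#} (image_mset unbox (sel G0 S)) {#} C"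
  shows "\<exists>A. UI p a S G Dl A"
proof -
  define fB where "fB G0 \<beta> = (SOME B. UI p a {#} (image_mset unbox (sel G0 S)) {#\<beta>#} B)" for G0 \<beta>
  define fC where "fC G0 = (SOME C. UI p a {#} (image_mset unbox (sel G0 S)) {#} C)" for G0
  have uB: "UI p a {#} (image_mset unbox (sel G0 S)) {#\<beta>#} (fB G0 \<beta>)" if "D G0 \<beta> \<in># Dl" for G0 \<beta>
    unfolding fB_def using IHB[OF that] by (rule someI_ex)
  have uC: "UI p a {#} (image_mset unbox (sel G0 S)) {#} (fC G0)" if "sel G0 S \<noteq> {#}" for G0
    unfolding fC_def using IHC[OF that] by (rule someI_ex)
  define V where "V = vars_ms (S + G + Dl) - {p}"
  define Ag where "Ag = agts_ms (S + G + Dl) - {a}"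
  define F1 :: "'a fm set" where "F1 = {Var q | q. Var q \<in># Dl \<and> q \<noteq> p}"
  define F2 :: "'a fm set" where "F2 = {Neg (Var q) | q. Var q \<in># G \<and> q \<noteq> p}"
  define F3 :: "'a fm set" where "F3 = {D (G0 - {a}) (fB G0 \<beta>) | G0 \<beta>. D G0 \<beta> \<in># Dl \<and> G0 - {a} \<noteq> {}}"
  define F4 :: "'a fm set" where "F4 = {Neg (D (\<Union>(grp ` set_mset (sel G0 S))) (Neg (fC G0))) | G0. a \<notin> G0 \<and> sel G0 S \<noteq> {#}}"
  define F where "F = F1 \<union> F2 \<union> F3 \<union> F4"
  have fin: "finite F"
  proof -
    have "F1 \<subseteq> set_mset Dl" unfolding F1_def by auto
    moreover have "F2 \<subseteq> Neg ` set_mset G" unfolding F2_def by auto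
    moreover have "F3 \<subseteq> (\<lambda>x. D (grp x - {a}) (fB (grp x) (unbox x))) ` set_mset Dl" unfolding F3_def by force
    moreover have "F4 \<subseteq> (\<lambda>G0. Neg (D (\<Union>(grp ` set_mset (sel G0 S))) (Neg (fC G0)))) ` UNIV" unfolding F4_def by auto
    ultimately show ?thesis unfolding F_def by (meson finite_imageI finite_set_mset finite_subset finite_Un finite_set_fm_type)
  qed
  have PF: "wf d \<and> vars d \<subseteq> V \<and> agts d \<subseteq> Ag \<and> deriv S (add_mset d G) Dl" if dF: "d \<in> F" for d
  proof -
    consider "d \<in> F1" | "d \<in> F2" | "d \<in> F3" | "d \<in> F4" using dF unfolding F_def by blast
    then show ?thesis
    proof cases
      case 1
      then obtain q where q: "d = Var q" "Var q \<in># Dl" "q \<noteq> p" unfolding F1_def by blast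
      have "deriv S (add_mset (Var q) G) Dl" by (rule Ax'[OF _ q(2) bS]) simp
      then show ?thesis using q mem_vars[OF q(2)] unfolding V_def Ag_def by auto
    next
      case 2
      then obtain q where q: "d = Neg (Var q)" "Var q \<in># G" "q \<noteq> p" unfolding F2_def by blast
      have "deriv S G (add_mset (Var q) Dl)" by (rule Ax'[OF q(2) _ bS]) simp
      then have "deriv S (add_mset (Neg (Var q)) G) Dl" by (rule deriv.NegL)
      then show ?thesis using q mem_vars[OF q(2)] unfolding V_def Ag_def by auto
    next
      case 3
      then obtain G0 \<beta> where q: "d = D (G0 - {a}) (fB G0 \<beta>)" "D G0 \<beta> \<in># Dl" "G0 - {a} \<noteq> {}" unfolding F3_def by blast
      let ?B = "fB G0 \<beta>"
      have u: "UI p a {#} (image_mset unbox (sel G0 S)) {#\<beta>#} ?B" using uB q(2) .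
      obtain Dl' where Dl': "Dl = add_mset (D G0 \<beta>) Dl'" using q(2) by (metis multi_member_split)
      have "deriv {#} (add_mset ?B (image_mset unbox (sel G0 S))) {#\<beta>#}" using u unfolding UI_def by simp
      then have "deriv {#} (image_mset unbox (sel G0 (add_mset d S))) {#\<beta>#}" using q(1) by auto
      then have "deriv (add_mset d S) G (add_mset (D G0 \<beta>) Dl')" using bS atG atD Dl' q(1)
        by (intro DK') auto
      then have "deriv (add_mset d S + {#}) (G + {#?B#}) (add_mset (D G0 \<beta>) Dl' + {#})"
        by (rule weak) simp
      then have "deriv (add_mset d S) (add_mset ?B G) Dl" using Dl' by simp
      then have dd: "deriv S (add_mset d G) Dl" unfolding q(1) by (rule deriv.DT)
      have "vars ?B \<subseteq> vars_ms S \<union> vars \<beta> - {p}" "agts ?B \<subseteq> agts_ms S \<union> agts \<beta> - {a}" "wf ?B"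
        using u vars_unbox_sel[of G0 S] agts_unbox_sel[of G0 S] unfolding UI_def by auto
      moreover have "vars \<beta> \<subseteq> vars_ms Dl" "agts (D G0 \<beta>) \<subseteq> agts_ms Dl" using mem_vars[OF q(2)] mem_agts[OF q(2)] by auto
      ultimately show ?thesis using dd q unfolding V_def Ag_def by auto
    next
      case 4
      then obtain G0 where q: "d = Neg (D (\<Union>(grp ` set_mset (sel G0 S))) (Neg (fC G0)))" "a \<notin> G0" "sel G0 S \<noteq> {#}"
        unfolding F4_def by blast
      define G' where "G' = \<Union>(grp ` set_mset (sel G0 S))"
      let ?C = "fC G0"
      have u: "UI p a {#} (image_mset unbox (sel G0 S)) {#} ?C" using uC q(3) .
      have "deriv {#} (add_mset ?C (image_mset unbox (sel G0 S))) {#}" using u unfolding UI_def by simp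
      then have "deriv {#} (image_mset unbox (sel G0 S)) {#Neg ?C#}" using deriv.NegR by fastforce
      then have "deriv {#} (image_mset unbox (sel G' S)) {#Neg ?C#}" unfolding G'_def sel_union .
      then have "deriv S G (add_mset (D G' (Neg ?C)) Dl)" using bS atG atD by (intro DK') auto
      then have dd: "deriv S (add_mset d G) Dl" unfolding q(1) G'_def[symmetric] by (rule deriv.NegL)
      have G'sub: "G' \<subseteq> G0" unfolding G'_def by (auto simp: sel_def)
      have G'ag: "G' \<subseteq> agts_ms S" unfolding G'_def using grp_agts sel_sub
        by (fastforce simp: agts_ms_def dest: mset_subset_eqD)
      obtain x where x: "x \<in># sel G0 S" using q(3) by (meson multiset_nonemptyE)
      then have "x \<in># S" using sel_sub by (metis mset_subset_eqD)
      then have "grp x \<noteq> {}" using grp_ne wS bS by (metis boxed_ms_def mem_wf)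
      then have "G' \<noteq> {}" using x unfolding G'_def by auto
      moreover have "vars ?C \<subseteq> vars_ms S - {p}" "agts ?C \<subseteq> agts_ms S - {a}" "wf ?C"
        using u vars_unbox_sel[of G0 S] agts_unbox_sel[of G0 S] unfolding UI_def by auto
      ultimately show ?thesis using dd q G'sub G'ag unfolding V_def Ag_def G'_def by auto
    qed
  qed
  obtain xs where xs: "set xs = F" using finite_list[OF fin] by blast
  define A where "A = disj xs"
  have "UI p a S G Dl A"
    unfolding UI_def
  proof (intro conjI allI impI)
    show "wf A" unfolding A_def disj_props using PF xs by blast
    show "vars A \<subseteq> vars_ms (S + G + Dl) - {p}" unfolding A_def disj_props using PF xs V_def by blast
    show "agts A \<subseteq> agts_ms (S + G + Dl) - {a}" unfolding A_def disj_props using PF xs Ag_def by blast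
    show "deriv S (add_mset A G) Dl" unfolding A_def using PF xs bS by (intro disj_left) auto
  next
    fix Pi Lm Th
    assume h: "wf_ms Pi \<and> wf_ms Lm \<and> wf_ms Th \<and> boxed_ms Th \<and> p \<notin> vars_ms (Pi + Lm + Th) \<and>
       a \<notin> agts_ms (Pi + Lm + Th) \<and> deriv (Th + S) (Pi + G) (Dl + Lm)"
    have hw: "deriv Th Pi (add_mset A Lm)" if "deriv Th Pi Lm" for Th Pi Lm
      using weak[OF that, of "{#}" "{#}" "{#A#}"] by simp
    have hF: "deriv Th Pi (add_mset A Lm)" if "d \<in> F" "deriv Th Pi (add_mset d Lm)" for d Th Pi Lm
      unfolding A_def using that xs by (intro disj_right[of d]) auto
    show "deriv Th Pi (add_mset A Lm)"
    proof (rule irred_iii[where F = F and fB = fB and fC = fC and p = p and a = a])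
      show "\<And>q. Var q \<in># Dl \<Longrightarrow> q \<noteq> p \<Longrightarrow> Var q \<in> F" unfolding F_def F1_def by blast
      show "\<And>q. Var q \<in># G \<Longrightarrow> q \<noteq> p \<Longrightarrow> Neg (Var q) \<in> F" unfolding F_def F2_def by blast
      show "\<And>G0 \<beta>. D G0 \<beta> \<in># Dl \<Longrightarrow> G0 - {a} \<noteq> {} \<Longrightarrow> D (G0 - {a}) (fB G0 \<beta>) \<in> F" unfolding F_def F3_def by blast
      show "\<And>G0. a \<notin> G0 \<Longrightarrow> sel G0 S \<noteq> {#} \<Longrightarrow> Neg (D (\<Union>(grp ` set_mset (sel G0 S))) (Neg (fC G0))) \<in> F"
        unfolding F_def F4_def by blast
    qed (use atG atD nd bS wS hw hF uB uC h in auto)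
  qed
  then show ?thesis by blast
qed


lemma mu_simps[simp]:
  "mu S (add_mset x G) Dl = w x + mu S G Dl"
  "mu S G (add_mset x Dl) = w x + mu S G Dl"
  "mu (add_mset x S) G Dl = v x + mu S G Dl"
  unfolding mu_def by simp_all

lemma w_pos: "w x > 0" by (cases x) auto

lemma sum_v: "sum_mset (image_mset v M) = sum_mset (image_mset w (image_mset unbox M)) + size M"
  by (induction M) (auto simp: v_def)

lemma sum_v_sel: "sum_mset (image_mset v (sel G0 S)) \<le> sum_mset (image_mset v S)"
proof -
  have "S = sel G0 S + filter_mset (\<lambda>x. \<not> grp x \<subseteq> G0) S" unfolding sel_def by (rule multiset_partition)
  then have "sum_mset (image_mset v S) = sum_mset (image_mset v (sel G0 S)) + sum_mset (image_mset v (filter_mset (\<lambda>x. \<not> grp x \<subseteq> G0) S))"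
    by (metis image_mset_union sum_mset.union)
  then show ?thesis by simp
qed

lemma mu_B: "D G0 \<beta> \<in># Dl \<Longrightarrow> mu {#} (image_mset unbox (sel G0 S)) {#\<beta>#} < mu S G Dl"
proof -
  assume "D G0 \<beta> \<in># Dl"
  then obtain Dl' where Dl': "Dl = add_mset (D G0 \<beta>) Dl'" by (metis multi_member_split)
  have "mu {#} (image_mset unbox (sel G0 S)) {#\<beta>#} = sum_mset (image_mset w (image_mset unbox (sel G0 S))) + w \<beta>"
    unfolding mu_def by simp
  also have "\<dots> \<le> sum_mset (image_mset v S) + w \<beta>" using sum_v[of "sel G0 S"] sum_v_sel[of G0 S] by simp
  also have "\<dots> < mu S G Dl" unfolding Dl' mu_def by simp
  finally show ?thesis .
qed

lemma mu_C: "sel G0 S \<noteq> {#} \<Longrightarrow> mu {#} (image_mset unbox (sel G0 S)) {#} < mu S G Dl"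
proof -
  assume "sel G0 S \<noteq> {#}"
  then have "size (sel G0 S) > 0" by (simp add: nonempty_has_size)
  then have "mu {#} (image_mset unbox (sel G0 S)) {#} < sum_mset (image_mset v (sel G0 S))"
    unfolding mu_def using sum_v[of "sel G0 S"] by simp
  also have "\<dots> \<le> mu S G Dl" using sum_v_sel[of G0 S] unfolding mu_def by simp
  finally show ?thesis .
qed

lemma main:
  fixes S G Dl :: "('a::finite) fm multiset"
  shows "wf_ms S \<Longrightarrow> wf_ms G \<Longrightarrow> wf_ms Dl \<Longrightarrow> boxed_ms S \<Longrightarrow> \<exists>A. UI p a S G Dl A"
proof (induction "mu S G Dl" arbitrary: S G Dl rule: less_induct)
  case less
  note IH = less.hyps
  show ?case
  proof (cases "\<exists>x\<in>#G. \<not> atom_or_bot x")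
    case True
    then obtain x G' where G': "G = add_mset x G'" "\<not> atom_or_bot x" by (metis multi_member_split)
    show ?thesis
    proof (cases x)
      case (And x1 x2)
      obtain A where A: "UI p a S (add_mset x1 (add_mset x2 G')) Dl A"
        using IH[of S "add_mset x1 (add_mset x2 G')" Dl] less.prems G' And by auto
      have "UI p a S G Dl A"
      proof (rule step1[OF A])
        fix X assume "deriv S (X + add_mset x1 (add_mset x2 G')) Dl"
        then show "deriv S (X + G) Dl" unfolding G' And by (simp add: deriv.AndL)
      next
        fix Th Pi Lm assume "deriv (Th + S) (Pi + G) (Dl + Lm)"
        then show "deriv (Th + S) (Pi + add_mset x1 (add_mset x2 G')) (Dl + Lm)"
          unfolding G' And by (simp add: inv_AndL)
      qed (use G' And in auto)
      then show ?thesis by blast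
    next
      case (Or x1 x2)
      obtain A1 where A1: "UI p a S (add_mset x1 G') Dl A1"
        using IH[of S "add_mset x1 G'" Dl] less.prems G' Or by auto
      obtain A2 where A2: "UI p a S (add_mset x2 G') Dl A2"
        using IH[of S "add_mset x2 G'" Dl] less.prems G' Or by auto
      have "UI p a S G Dl (And A1 A2)"
      proof (rule step2[OF A1 A2])
        fix X assume "deriv S (X + add_mset x1 G') Dl" "deriv S (X + add_mset x2 G') Dl"
        then show "deriv S (X + G) Dl" unfolding G' Or by (simp add: deriv.OrL)
      next
        fix Th Pi Lm assume "deriv (Th + S) (Pi + G) (Dl + Lm)"
        then show "deriv (Th + S) (Pi + add_mset x1 G') (Dl + Lm)"
          unfolding G' Or using inv_OrL by fastforce
      next
        fix Th Pi Lm assume "deriv (Th + S) (Pi + G) (Dl + Lm)"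
        then show "deriv (Th + S) (Pi + add_mset x2 G') (Dl + Lm)"
          unfolding G' Or using inv_OrL by fastforce
      qed (use G' Or in auto)
      then show ?thesis by blast
    next
      case (Imp x1 x2)
      obtain A1 where A1: "UI p a S G' (add_mset x1 Dl) A1"
        using IH[of S G' "add_mset x1 Dl"] less.prems G' Imp by auto
      obtain A2 where A2: "UI p a S (add_mset x2 G') Dl A2"
        using IH[of S "add_mset x2 G'" Dl] less.prems G' Imp by auto
      have "UI p a S G Dl (And A1 A2)"
      proof (rule step2[OF A1 A2])
        fix X assume "deriv S (X + G') (add_mset x1 Dl)" "deriv S (X + add_mset x2 G') Dl"
        then show "deriv S (X + G) Dl" unfolding G' Imp by (simp add: deriv.ImpL)
      next
        fix Th Pi Lm assume "deriv (Th + S) (Pi + G) (Dl + Lm)"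
        then show "deriv (Th + S) (Pi + G') (add_mset x1 Dl + Lm)"
          unfolding G' Imp using inv_ImpL by fastforce
      next
        fix Th Pi Lm assume "deriv (Th + S) (Pi + G) (Dl + Lm)"
        then show "deriv (Th + S) (Pi + add_mset x2 G') (Dl + Lm)"
          unfolding G' Imp using inv_ImpL by fastforce
      qed (use G' Imp in auto)
      then show ?thesis by blast
    next
      case (Neg x1)
      obtain A where A: "UI p a S G' (add_mset x1 Dl) A"
        using IH[of S G' "add_mset x1 Dl"] less.prems G' Neg by auto
      have "UI p a S G Dl A"
      proof (rule step1[OF A])
        fix X assume "deriv S (X + G') (add_mset x1 Dl)"
        then show "deriv S (X + G) Dl" unfolding G' Neg by (simp add: deriv.NegL)
      next
        fix Th Pi Lm assume "deriv (Th + S) (Pi + G) (Dl + Lm)"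
        then show "deriv (Th + S) (Pi + G') (add_mset x1 Dl + Lm)"
          unfolding G' Neg using inv_NegL by fastforce
      qed (use G' Neg in auto)
      then show ?thesis by blast
    next
      case (D H c)
      obtain A where A: "UI p a (add_mset (D H c) S) (add_mset c G') Dl A"
        using IH[of "add_mset (D H c) S" "add_mset c G'" Dl] less.prems G' D by (auto simp: v_def)
      have "UI p a S G Dl A"
      proof (rule step1[OF A])
        fix X assume "deriv (add_mset (D H c) S) (X + add_mset c G') Dl"
        then show "deriv S (X + G) Dl" unfolding G' D by (simp add: deriv.DT)
      next
        fix Th Pi Lm assume "deriv (Th + S) (Pi + G) (Dl + Lm)"
        then show "deriv (Th + add_mset (D H c) S) (Pi + add_mset c G') (Dl + Lm)"
          unfolding G' D using inv_DT by fastforce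
      qed (use G' D in auto)
      then show ?thesis by blast
    qed (use G' in auto)
  next
    case False
    note atG = this
    show ?thesis
    proof (cases "\<exists>x\<in>#Dl. \<not> (atom_or_bot x \<or> boxed x)")
      case True
      then obtain x Dl' where Dl': "Dl = add_mset x Dl'" "\<not> (atom_or_bot x \<or> boxed x)" by (metis multi_member_split)
      show ?thesis
      proof (cases x)
        case (And x1 x2)
        obtain A1 where A1: "UI p a S G (add_mset x1 Dl') A1"
          using IH[of S G "add_mset x1 Dl'"] less.prems Dl' And by auto
        obtain A2 where A2: "UI p a S G (add_mset x2 Dl') A2"
          using IH[of S G "add_mset x2 Dl'"] less.prems Dl' And by auto
        have "UI p a S G Dl (And A1 A2)"
        proof (rule step2[OF A1 A2])
          fix X assume "deriv S (X + G) (add_mset x1 Dl')" "deriv S (X + G) (add_mset x2 Dl')"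
          then show "deriv S (X + G) Dl" unfolding Dl' And by (simp add: deriv.AndR)
        next
          fix Th Pi Lm assume "deriv (Th + S) (Pi + G) (Dl + Lm)"
          then show "deriv (Th + S) (Pi + G) (add_mset x1 Dl' + Lm)"
            unfolding Dl' And using inv_AndR by fastforce
        next
          fix Th Pi Lm assume "deriv (Th + S) (Pi + G) (Dl + Lm)"
          then show "deriv (Th + S) (Pi + G) (add_mset x2 Dl' + Lm)"
            unfolding Dl' And using inv_AndR by fastforce
        qed (use Dl' And in auto)
        then show ?thesis by blast
      next
        case (Or x1 x2)
        obtain A where A: "UI p a S G (add_mset x1 (add_mset x2 Dl')) A"
          using IH[of S G "add_mset x1 (add_mset x2 Dl')"] less.prems Dl' Or by auto
        have "UI p a S G Dl A"
        proof (rule step1[OF A])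
          fix X assume "deriv S (X + G) (add_mset x1 (add_mset x2 Dl'))"
          then show "deriv S (X + G) Dl" unfolding Dl' Or by (simp add: deriv.OrR)
        next
          fix Th Pi Lm assume "deriv (Th + S) (Pi + G) (Dl + Lm)"
          then show "deriv (Th + S) (Pi + G) (add_mset x1 (add_mset x2 Dl') + Lm)"
            unfolding Dl' Or using inv_OrR by fastforce
        qed (use Dl' Or in auto)
        then show ?thesis by blast
      next
        case (Imp x1 x2)
        obtain A where A: "UI p a S (add_mset x1 G) (add_mset x2 Dl') A"
          using IH[of S "add_mset x1 G" "add_mset x2 Dl'"] less.prems Dl' Imp by auto
        have "UI p a S G Dl A"
        proof (rule step1[OF A])
          fix X assume "deriv S (X + add_mset x1 G) (add_mset x2 Dl')"
          then show "deriv S (X + G) Dl" unfolding Dl' Imp by (simp add: deriv.ImpR)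
        next
          fix Th Pi Lm assume "deriv (Th + S) (Pi + G) (Dl + Lm)"
          then show "deriv (Th + S) (Pi + add_mset x1 G) (add_mset x2 Dl' + Lm)"
            unfolding Dl' Imp using inv_ImpR by fastforce
        qed (use Dl' Imp in auto)
        then show ?thesis by blast
      next
        case (Neg x1)
        obtain A where A: "UI p a S (add_mset x1 G) Dl' A"
          using IH[of S "add_mset x1 G" "Dl'"] less.prems Dl' Neg by auto
        have "UI p a S G Dl A"
        proof (rule step1[OF A])
          fix X assume "deriv S (X + add_mset x1 G) Dl'"
          then show "deriv S (X + G) Dl" unfolding Dl' Neg by (simp add: deriv.NegR)
        next
          fix Th Pi Lm assume "deriv (Th + S) (Pi + G) (Dl + Lm)"
          then show "deriv (Th + S) (Pi + add_mset x1 G) (Dl' + Lm)"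
            unfolding Dl' Neg using inv_NegR by fastforce
        qed (use Dl' Neg in auto)
        then show ?thesis by blast
      qed (use Dl' in auto)
    next
      case False
      note atD = this
      show ?thesis
      proof (cases "deriv S G Dl")
        case True
        show ?thesis using Top_UI[OF True, of p a] by blast
      next
        case False
        show ?thesis
        proof (rule irred)
          fix G0 \<beta> assume h: "D G0 \<beta> \<in># Dl"
          show "\<exists>B. UI p a {#} (image_mset unbox (sel G0 S)) {#\<beta>#} B"
            using IH[OF mu_B[OF h]] less.prems wf_unbox_sel mem_wf[OF h] by auto
        next
          fix G0 assume h: "sel G0 S \<noteq> {#}"
          show "\<exists>C. UI p a {#} (image_mset unbox (sel G0 S)) {#} C"
            using IH[OF mu_C[OF h]] less.prems wf_unbox_sel by auto
        qed (use less.prems atG atD False in auto)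
      qed
    qed
  qed
qed

lemma th_to_gamma: "deriv Th Pi Dl \<Longrightarrow> deriv {#} (Th + Pi) Dl"
proof (induction Th arbitrary: Pi)
  case empty
  then show ?case by simp
next
  case (add x Th)
  have "boxed x" using deriv_boxed[OF add.prems] by simp
  then obtain H c where x: "x = D H c" by (cases x) auto
  have "deriv (add_mset x Th + {#}) (Pi + {#c#}) (Dl + {#})" using weak[OF add.prems, of "{#}" "{#c#}" "{#}"] by simp
  then have "deriv (add_mset (D H c) Th) (add_mset c Pi) Dl" using x by simp
  then have "deriv Th (add_mset (D H c) Pi) Dl" by (rule deriv.DT)
  then have "deriv {#} (Th + add_mset (D H c) Pi) Dl" by (rule add.IH)
  then show ?case using x by simp
qed

theorem theorem6p18:
  fixes Sg Gm Dl :: "('a::finite) fm multiset" and p :: nat and a :: 'a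
  assumes "wf_ms Sg" and "wf_ms Gm" and "wf_ms Dl" and "boxed_ms Sg"
  shows "\<exists>A. wf A
    \<and> vars A \<subseteq> vars_ms (Sg + Gm + Dl) - {p}
    \<and> agts A \<subseteq> agts_ms (Sg + Gm + Dl) - {a}
    \<and> deriv Sg (add_mset A Gm) Dl
    \<and> (\<forall>Pi Lm Th. wf_ms Pi \<and> wf_ms Lm \<and> wf_ms Th \<and> boxed_ms Th
          \<and> p \<notin> vars_ms (Pi + Lm + Th) \<and> a \<notin> agts_ms (Pi + Lm + Th)
          \<and> deriv (Th + Sg) (Pi + Gm) (Dl + Lm)
          \<longrightarrow> deriv {#} (Th + Pi) (add_mset A Lm))"
proof -
  obtain A where A: "UI p a Sg Gm Dl A" using main assms by blast
  show ?thesis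
  proof (rule exI[of _ A], intro conjI allI impI)
    show "wf A" "vars A \<subseteq> vars_ms (Sg + Gm + Dl) - {p}" "agts A \<subseteq> agts_ms (Sg + Gm + Dl) - {a}"
      "deriv Sg (add_mset A Gm) Dl" using A unfolding UI_def by auto
  next
    fix Pi Lm Th
    assume "wf_ms Pi \<and> wf_ms Lm \<and> wf_ms Th \<and> boxed_ms Th
          \<and> p \<notin> vars_ms (Pi + Lm + Th) \<and> a \<notin> agts_ms (Pi + Lm + Th)
          \<and> deriv (Th + Sg) (Pi + Gm) (Dl + Lm)"
    then have "deriv Th Pi (add_mset A Lm)" using A unfolding UI_def by blast
    then show "deriv {#} (Th + Pi) (add_mset A Lm)" by (rule th_to_gamma)
  qed
qed

end
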